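(* Let $V$ be a real vector space with a non-degenerate symmetric inner product of arbitrary signature, and let $\nabla R$ be a covariant derivative algebraic curvature tensor on $V$. If $\mathcal{S}_{\nabla R}(x)=0$ for all $x\in V$, then $\nabla R=0$.
   Context: A covariant derivative algebraic curvature tensor is $\nabla R\in\otimes^5V^*$ satisfying $\nabla R(a,b,c,d;e)=-\nabla R(b,a,c,d;e)=\nabla R(c,d,a,b;e)$, $\nabla R(a,b,c,d;e)+\nabla R(a,c,d,b;e)+\nabla R(a,d,b,c;e)=0$, and $\nabla R(a,b,c,d;e)+\nabla R(a,b,d,e;c)+\nabla R(a,b,e,c;d)=0$. The Szab\'o operator is defined by $(\mathcal{S}_{\nabla R}(x)y,w)=\nabla R(y,x,x,w;x)$. *)

theory Defs
  imports "HOL-Analysis.Analysis"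
begin

definition nondeg_sym_inner :: "('v::euclidean_space \<Rightarrow> 'v \<Rightarrow> real) \<Rightarrow> bool" where
  "nondeg_sym_inner g \<longleftrightarrow> bilinear g \<and> (\<forall>x y. g x y = g y x)
     \<and> (\<forall>x. (\<forall>y. g x y = 0) \<longrightarrow> x = 0)"

definition multilinear5 :: "('v::real_vector \<Rightarrow> 'v \<Rightarrow> 'v \<Rightarrow> 'v \<Rightarrow> 'v \<Rightarrow> real) \<Rightarrow> bool" where
  "multilinear5 T \<longleftrightarrow>
     (\<forall>b c d e. linear (\<lambda>a. T a b c d e)) \<and>
     (\<forall>a c d e. linear (\<lambda>b. T a b c d e)) \<and>
     (\<forall>a b d e. linear (\<lambda>c. T a b c d e)) \<and>
     (\<forall>a b c e. linear (\<lambda>d. T a b c d e)) \<and>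
     (\<forall>a b c d. linear (\<lambda>e. T a b c d e))"

text \<open>Covariant derivative algebraic curvature tensor; T a b c d e stands for
the paper's nabla R(a,b,c,d;e).\<close>
definition cov_deriv_alg_curv :: "('v::real_vector \<Rightarrow> 'v \<Rightarrow> 'v \<Rightarrow> 'v \<Rightarrow> 'v \<Rightarrow> real) \<Rightarrow> bool" where
  "cov_deriv_alg_curv T \<longleftrightarrow> multilinear5 T \<and>
     (\<forall>a b c d e. T a b c d e = - T b a c d e) \<and>
     (\<forall>a b c d e. T a b c d e = T c d a b e) \<and>
     (\<forall>a b c d e. T a b c d e + T a c d b e + T a d b c e = 0) \<and>
     (\<forall>a b c d e. T a b c d e + T a b d e c + T a b e c d = 0)"

definition szabo :: "('v \<Rightarrow> 'v \<Rightarrow> real) \<Rightarrow> ('v \<Rightarrow> 'v \<Rightarrow> 'v \<Rightarrow> 'v \<Rightarrow> 'v \<Rightarrow> real) \<Rightarrow> 'v \<Rightarrow> 'v \<Rightarrow> 'v" where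
  "szabo g T x y = (THE z. \<forall>w. g z w = T y x x w x)"

end

theory Submission imports Defs begin

lemma riesz:
  fixes g :: "'v::euclidean_space \<Rightarrow> 'v \<Rightarrow> real"
  assumes g: "nondeg_sym_inner g" and f: "linear f"
  shows "\<exists>z. \<forall>w. g z w = f w"
proof -
  have bl: "bilinear g" using g by (simp add: nondeg_sym_inner_def)
  have nd: "\<And>x. (\<forall>y. g x y = 0) \<Longrightarrow> x = 0" using g by (simp add: nondeg_sym_inner_def)
  define L where "L z = (\<Sum>b\<in>Basis. g z b *\<^sub>R b)" for z
  have Lw: "L z \<bullet> w = g z w" for z w
  proof -
    have "L z \<bullet> w = (\<Sum>b\<in>Basis. g z b * (b \<bullet> w))"
      by (simp add: L_def inner_sum_left)
    also have "\<dots> = (\<Sum>b\<in>Basis. g z ((w \<bullet> b) *\<^sub>R b))"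
      using bilinear_rmul[OF bl] by (simp add: inner_commute mult.commute)
    also have "\<dots> = g z (\<Sum>b\<in>Basis. (w \<bullet> b) *\<^sub>R b)"
      using bl unfolding bilinear_def by (simp add: linear_sum)
    also have "\<dots> = g z w" by (simp add: euclidean_representation)
    finally show ?thesis .
  qed
  have lin: "linear L"
    unfolding L_def
    by (intro linearI) (simp_all add: bilinear_ladd[OF bl] bilinear_lmul[OF bl] scaleR_add_left sum.distrib scaleR_sum_right)
  have inj: "inj L"
  proof (rule linear_injective_0[OF lin, THEN iffD2], intro allI impI)
    fix z assume "L z = 0"
    then have "\<forall>y. g z y = 0" using Lw by (metis inner_zero_left)
    then show "z = 0" using nd by blast
  qed
  have "surj L" using linear_injective_imp_surjective[OF lin inj] by simp
  then obtain z where z: "L z = (\<Sum>b\<in>Basis. f b *\<^sub>R b)" by (metis surjD)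
  have "g z w = f w" for w
  proof -
    have "g z w = (\<Sum>b\<in>Basis. f b *\<^sub>R b) \<bullet> w" using Lw z by metis
    also have "\<dots> = (\<Sum>b\<in>Basis. f ((w \<bullet> b) *\<^sub>R b))"
      using f by (simp add: inner_sum_left inner_sum_right linear_scale inner_commute mult.commute)
    also have "\<dots> = f (\<Sum>b\<in>Basis. (w \<bullet> b) *\<^sub>R b)" using f by (simp add: linear_sum)
    also have "\<dots> = f w" by (simp add: euclidean_representation)
    finally show ?thesis .
  qed
  then show ?thesis by blast
qed

lemma alg:
  fixes T :: "'v \<Rightarrow> 'v \<Rightarrow> 'v \<Rightarrow> 'v \<Rightarrow> 'v \<Rightarrow> real"
  assumes A: "\<And>a b c d e. T a b c d e = - T b a c d e"
    and P: "\<And>a b c d e. T a b c d e = T c d a b e"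
    and B1: "\<And>a b c d e. T a b c d e + T a c d b e + T a d b c e = 0"
    and B2: "\<And>a b c d e. T a b c d e + T a b d e c + T a b e c d = 0"
    and S: "\<And>y a b w c. T y a b w c + T y b a w c + T y a c w b + T y c a w b + T y b c w a + T y c b w a = 0"
  shows "T a b c d e = 0"
proof -
  have e0: "T a b d c e + T a d c b e + T a c b d e = 0" by (rule B1)
  have e1: "T a b e c d + T a e c b d + T a c b e d = 0" by (rule B1)
  have e2: "T a b e d c - T e d a b c = 0" using P[of a b e d c] by linarith
  have e3: "T a b e d c + T a b d c e + T a b c e d = 0" by (rule B2)
  have e4: "T a b e d c + T a e b d c + T a b c d e + T a c b d e + T a e c d b + T a c e d b = 0" by (rule S)
  have e5: "T a c b d e + T c a b d e = 0" using A[of a c b d e] by linarith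
  have e6: "T a c b d e - T b d a c e = 0" using P[of a c b d e] by linarith
  have e7: "T a c b e d + T c a b e d = 0" using A[of a c b e d] by linarith
  have e8: "T a c e d b - T e d a c b = 0" using P[of a c e d b] by linarith
  have e9: "T a d b e c - T b e a d c = 0" using P[of a d b e c] by linarith
  have e10: "T a d e c b + T a d c b e + T a d b e c = 0" by (rule B2)
  have e11: "T a e b c d + T a b c e d + T a c e b d = 0" by (rule B1)
  have e12: "T a e b d c - T b d a e c = 0" using P[of a e b d c] by linarith
  have e13: "T a e c d b + T e a c d b = 0" using A[of a e c d b] by linarith
  have e14: "T b a c d e + T a b c d e = 0" using A[of b a c d e] by linarith
  have e15: "T b d a c e + T b a c d e + T b c d a e = 0" by (rule B1)
  have e16: "T b e c a d - T c a b e d = 0" using P[of b e c a d] by linarith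
  have e17: "T b e d a c - T d a b e c = 0" using P[of b e d a c] by linarith
  have e18: "T b e d a c + T b d a e c + T b a e d c = 0" by (rule B1)
  have e19: "T b e d c a - T d c b e a = 0" using P[of b e d c a] by linarith
  have e20: "T b e d c a + T b e c a d + T b e a d c = 0" by (rule B2)
  have e21: "T c a b e d + T c a e d b + T c a d b e = 0" by (rule B2)
  have e22: "T c a d e b + T c a e b d + T c a b d e = 0" by (rule B2)
  have e23: "T c a e b d - T e b c a d = 0" using P[of c a e b d] by linarith
  have e24: "T c a e b d + T c e b a d + T c b a e d = 0" by (rule B1)
  have e25: "T c a e d b + T a c e d b = 0" using A[of c a e d b] by linarith
  have e26: "T c b a d e + T c a d b e + T c d b a e = 0" by (rule B1)
  have e27: "T c b a e d - T a e c b d = 0" using P[of c b a e d] by linarith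
  have e28: "T c b d a e + T b c d a e = 0" using A[of c b d a e] by linarith
  have e29: "T c b d a e + T c d a b e + T c a b d e = 0" by (rule B1)
  have e30: "T c b d a e + T c b a e d + T c b e d a = 0" by (rule B2)
  have e31: "T c b d e a + T c d e b a + T c e b d a = 0" by (rule B1)
  have e32: "T c b e d a - T e d c b a = 0" using P[of c b e d a] by linarith
  have e33: "T c b e d a + T c e b d a + T c b a d e + T c a b d e + T c e a d b + T c a e d b = 0" by (rule S)
  have e34: "T c d a b e + T c d b e a + T c d e a b = 0" by (rule B2)
  have e35: "T c d b a e + T d c b a e = 0" using A[of c d b a e] by linarith
  have e36: "T c d b a e - T b a c d e = 0" using P[of c d b a e] by linarith
  have e37: "T c d b a e + T c d a e b + T c d e b a = 0" by (rule B2)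
  have e38: "T c d b e a + T d c b e a = 0" using A[of c d b e a] by linarith
  have e39: "T c d b e a + T c b d e a + T c d a e b + T c a d e b + T c b a e d + T c a b e d = 0" by (rule S)
  have e40: "T c e a d b + T c a d e b + T c d e a b = 0" by (rule B1)
  have e41: "T c e b a d + T e c b a d = 0" using A[of c e b a d] by linarith
  have e42: "T c e b a d + T c b e a d + T c e d a b + T c d e a b + T c b d a e + T c d b a e = 0" by (rule S)
  have e43: "T c e d a b + T c d a e b + T c a e d b = 0" by (rule B1)
  have e44: "T c e d a b + T c e a b d + T c e b d a = 0" by (rule B2)
  have e45: "T d a b c e - T b c d a e = 0" using P[of d a b c e] by linarith
  have e46: "T d a e c b + T d a c b e + T d a b e c = 0" by (rule B2)
  have e47: "T d b a c e + T b d a c e = 0" using A[of d b a c e] by linarith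
  have e48: "T d b c a e - T c a d b e = 0" using P[of d b c a e] by linarith
  have e49: "T d b c a e + T d c a b e + T d a b c e = 0" by (rule B1)
  have e50: "T d b e a c + T d e b a c + T d b c a e + T d c b a e + T d e c a b + T d c e a b = 0" by (rule S)
  have e51: "T d c a b e + T c d a b e = 0" using A[of d c a b e] by linarith
  have e52: "T d c b a e + T d b a c e + T d a c b e = 0" by (rule B1)
  have e53: "T d c e a b + T d c a b e + T d c b e a = 0" by (rule B2)
  have e54: "T d e b a c + T e d b a c = 0" using A[of d e b a c] by linarith
  have e55: "T d e c a b + T e d c a b = 0" using A[of d e c a b] by linarith
  have e56: "T e a b c d + T a e b c d = 0" using A[of e a b c d] by linarith
  have e57: "T e a b c d + T e a c d b + T e a d b c = 0" by (rule B2)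
  have e58: "T e a b d c + T e a d c b + T e a c b d = 0" by (rule B2)
  have e59: "T e a c b d + T a e c b d = 0" using A[of e a c b d] by linarith
  have e60: "T e a c b d - T c b e a d = 0" using P[of e a c b d] by linarith
  have e61: "T e a c d b + T e c a d b + T e a b d c + T e b a d c + T e c b d a + T e b c d a = 0" by (rule S)
  have e62: "T e a d b c - T d b e a c = 0" using P[of e a d b c] by linarith
  have e63: "T e a d c b + T e d c a b + T e c a d b = 0" by (rule B1)
  have e64: "T e b a c d - T a c e b d = 0" using P[of e b a c d] by linarith
  have e65: "T e b a c d + T e a c b d + T e c b a d = 0" by (rule B1)
  have e66: "T e b a c d + T e a b c d + T e b d c a + T e d b c a + T e a d c b + T e d a c b = 0" by (rule S)
  have e67: "T e b a d c + T b e a d c = 0" using A[of e b a d c] by linarith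
  have e68: "T e b c a d + T b e c a d = 0" using A[of e b c a d] by linarith
  have e69: "T e b c d a - T c d e b a = 0" using P[of e b c d a] by linarith
  have e70: "T e b d a c + T b e d a c = 0" using A[of e b d a c] by linarith
  have e71: "T e b d c a + T e b c a d + T e b a d c = 0" by (rule B2)
  have e72: "T e c a b d + T c e a b d = 0" using A[of e c a b d] by linarith
  have e73: "T e c a b d - T a b e c d = 0" using P[of e c a b d] by linarith
  have e74: "T e c a b d + T e a c b d + T e c d b a + T e d c b a + T e a d b c + T e d a b c = 0" by (rule S)
  have e75: "T e c a d b - T a d e c b = 0" using P[of e c a d b] by linarith
  have e76: "T e c b a d + T e b c a d + T e c d a b + T e d c a b + T e b d a c + T e d b a c = 0" by (rule S)
  have e77: "T e c b d a + T e b d c a + T e d c b a = 0" by (rule B1)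
  have e78: "T e c d a b - T d a e c b = 0" using P[of e c d a b] by linarith
  have e79: "T e d a c b + T e a c d b + T e c d a b = 0" by (rule B1)
  have e80: "T e d b a c - T b a e d c = 0" using P[of e d b a c] by linarith
  have e81: "T e d b a c + T e b a d c + T e a d b c = 0" by (rule B1)
  have e82: "T e d b c a + T e b c d a + T e c d b a = 0" by (rule B1)
  have "12 * T a b c d e = (5) * (T a b d c e + T a d c b e + T a c b d e) + (-12) * (T a b e c d + T a e c b d + T a c b e d) + (11) * (T a b e d c - T e d a b c) + (-5) * (T a b e d c + T a b d c e + T a b c e d) + (-6) * (T a b e d c + T a e b d c + T a b c d e + T a c b d e + T a e c d b + T a c e d b) + (11) * (T a c b d e + T c a b d e) + (-10) * (T a c b d e - T b d a c e) + (12) * (T a c b e d + T c a b e d) + (3) * (T a c e d b - T e d a c b) + (5) * (T a d b e c - T b e a d c) + (-5) * (T a d e c b + T a d c b e + T a d b e c) + (5) * (T a e b c d + T a b c e d + T a c e b d) + (6) * (T a e b d c - T b d a e c) + (6) * (T a e c d b + T e a c d b) + (18) * (T b a c d e + T a b c d e) + (-11) * (T b d a c e + T b a c d e + T b c d a e) + (1) * (T b e c a d - T c a b e d) + (1) * (T b e d a c - T d a b e c) + (6) * (T b e d a c + T b d a e c + T b a e d c) + (-1) * (T b e d c a - T d c b e a) + (1) * (T b e d c a + T b e c a d + T b e a d c) + (-6) * (T c a b e d + T c a e d b + T c a d b e) + (1) * (T c a d e b + T c a e b d + T c a b d e) + (2) * (T c a e b d - T e b c a d) + (-3) * (T c a e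 b d + T c e b a d + T c b a e d) + (3) * (T c a e d b + T a c e d b) + (4) * (T c b a d e + T c a d b e + T c d b a e) + (7) * (T c b a e d - T a e c b d) + (13) * (T c b d a e + T b c d a e) + (-8) * (T c b d a e + T c d a b e + T c a b d e) + (1) * (T c b d a e + T c b a e d + T c b e d a) + (5) * (T c b d e a + T c d e b a + T c e b d a) + (3) * (T c b e d a - T e d c b a) + (-4) * (T c b e d a + T c e b d a + T c b a d e + T c a b d e + T c e a d b + T c a e d b) + (2) * (T c d a b e + T c d b e a + T c d e a b) + (-3) * (T c d b a e + T d c b a e) + (7) * (T c d b a e - T b a c d e) + (-2) * (T c d b a e + T c d a e b + T c d e b a) + (3) * (T c d b e a + T d c b e a) + (-5) * (T c d b e a + T c b d e a + T c d a e b + T c a d e b + T c b a e d + T c a b e d) + (4) * (T c e a d b + T c a d e b + T c d e a b) + (9) * (T c e b a d + T e c b a d) + (-6) * (T c e b a d + T c b e a d + T c e d a b + T c d e a b + T c b d a e + T c d b a e) + (7) * (T c e d a b + T c d a e b + T c a e d b) + (-1) * (T c e d a b + T c e a b d + T c e b d a) + (2) * (T d a b c e - T b c d a e) + (1) * (T d a e c b + T d a c b e + T d a b e c) + (1) * (T d b a c e + T b d a c e) + (-2) * (T d b c a e - T c a d b e) + (-2) * (T d b c a e + T d c a b e + T d a b c e) + (4) * (T d b e a c + T d e b a c + T d b c a e + T d c b a e + T d e c a b + T d c e a b) + (6) * (T d c a b e + T c d a b e) + (-1) * (T d c b a e + T d b a c e + T d a c b e) + (-4) * (T d c e a b + T d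 c a b e + T d c b e a) + (-4) * (T d e b a c + T e d b a c) + (-4) * (T d e c a b + T e d c a b) + (-5) * (T e a b c d + T a e b c d) + (-6) * (T e a b c d + T e a c d b + T e a d b c) + (-8) * (T e a b d c + T e a d c b + T e a c b d) + (19) * (T e a c b d + T a e c b d) + (-6) * (T e a c b d - T c b e a d) + (8) * (T e a c d b + T e c a d b + T e a b d c + T e b a d c + T e c b d a + T e b c d a) + (4) * (T e a d b c - T d b e a c) + (-3) * (T e a d c b + T e d c a b + T e c a d b) + (5) * (T e b a c d - T a c e b d) + (-16) * (T e b a c d + T e a c b d + T e c b a d) + (11) * (T e b a c d + T e a b c d + T e b d c a + T e d b c a + T e a d c b + T e d a c b) + (4) * (T e b a d c + T b e a d c) + (-2) * (T e b c a d + T b e c a d) + (3) * (T e b c d a - T c d e b a) + (-7) * (T e b d a c + T b e d a c) + (-3) * (T e b d c a + T e b c a d + T e b a d c) + (1) * (T e c a b d + T c e a b d) + (-12) * (T e c a b d - T a b e c d) + (11) * (T e c a b d + T e a c b d + T e c d b a + T e d c b a + T e a d b c + T e d a b c) + (-5) * (T e c a d b - T a d e c b) + (7) * (T e c b a d + T e b c a d + T e c d a b + T e d c a b + T e b d a c + T e d b a c) + (-8) * (T e c b d a + T e b d c a + T e d c b a) + (1) * (T e c d a b - T d a e c b) + (-8) * (T e d a c b + T e a c d b + T e c d a b) + (6) * (T e d b a c - T b a e d c) + (-9) * (T e d b a c + T e b a d c + T e a d b c) + (-11) * (T e d b c a + T e b c d a + T e c d b a)" by (simp add: algebra_simps)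
  also have "\<dots> = 0" by (simp only: e0 e1 e2 e3 e4 e5 e6 e7 e8 e9 e10 e11 e12 e13 e14 e15 e16 e17 e18 e19 e20 e21 e22 e23 e24 e25 e26 e27 e28 e29 e30 e31 e32 e33 e34 e35 e36 e37 e38 e39 e40 e41 e42 e43 e44 e45 e46 e47 e48 e49 e50 e51 e52 e53 e54 e55 e56 e57 e58 e59 e60 e61 e62 e63 e64 e65 e66 e67 e68 e69 e70 e71 e72 e73 e74 e75 e76 e77 e78 e79 e80 e81 e82)
  finally show ?thesis by simp
qed

theorem lemma3p2:
  fixes g :: "'v::euclidean_space \<Rightarrow> 'v \<Rightarrow> real"
    and T :: "'v \<Rightarrow> 'v \<Rightarrow> 'v \<Rightarrow> 'v \<Rightarrow> 'v \<Rightarrow> real"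
  assumes "nondeg_sym_inner g"
    and "cov_deriv_alg_curv T"
    and "\<forall>x. szabo g T x = (\<lambda>y. 0)"
  shows "T = (\<lambda>a b c d e. 0)"
proof -
  have bl: "bilinear g" using assms(1) by (simp add: nondeg_sym_inner_def)
  have nd: "\<And>x. (\<forall>y. g x y = 0) \<Longrightarrow> x = 0" using assms(1) by (simp add: nondeg_sym_inner_def)
  have ml: "multilinear5 T" using assms(2) unfolding cov_deriv_alg_curv_def by blast
  have A: "\<And>a b c d e. T a b c d e = - T b a c d e"
    using assms(2) unfolding cov_deriv_alg_curv_def by blast
  have P: "\<And>a b c d e. T a b c d e = T c d a b e"
    using assms(2) unfolding cov_deriv_alg_curv_def by blast
  have B1: "\<And>a b c d e. T a b c d e + T a c d b e + T a d b c e = 0"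
    using assms(2) unfolding cov_deriv_alg_curv_def by blast
  have B2: "\<And>a b c d e. T a b c d e + T a b d e c + T a b e c d = 0"
    using assms(2) unfolding cov_deriv_alg_curv_def by blast
  have l2: "T a (b + b') c d e = T a b c d e + T a b' c d e" for a b b' c d e
  proof -
    have "linear (\<lambda>b. T a b c d e)" using ml unfolding multilinear5_def by blast
    then show ?thesis by (rule linear_add)
  qed
  have l3: "T a b (c + c') d e = T a b c d e + T a b c' d e" for a b c c' d e
  proof -
    have "linear (\<lambda>c. T a b c d e)" using ml unfolding multilinear5_def by blast
    then show ?thesis by (rule linear_add)
  qed
  have l5: "T a b c d (e + e') = T a b c d e + T a b c d e'" for a b c d e e'
  proof -
    have "linear (\<lambda>e. T a b c d e)" using ml unfolding multilinear5_def by blast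
    then show ?thesis by (rule linear_add)
  qed
  have Q: "T y x x w x = 0" for y x w
  proof -
    have lf: "linear (\<lambda>w. T y x x w x)" using ml unfolding multilinear5_def by blast
    obtain z where z: "\<forall>w. g z w = T y x x w x" using riesz[OF assms(1) lf] by blast
    have uniq: "z' = z" if "\<forall>w. g z' w = T y x x w x" for z'
    proof -
      have "\<forall>w. g (z' - z) w = 0"
      proof
        fix w
        have "linear (\<lambda>x. g x w)" using bl by (simp add: bilinear_def)
        then have "g (z' - z) w = g z' w - g z w" by (rule linear_diff)
        then show "g (z' - z) w = 0" using that z by simp
      qed
      then have "z' - z = 0" by (rule nd)
      then show ?thesis by simp
    qed
    have "szabo g T x y = z" unfolding szabo_def
    proof (rule the_equality)
      show "\<forall>w. g z w = T y x x w x" by (rule z)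
      show "z' = z" if "\<forall>w. g z' w = T y x x w x" for z' using that by (rule uniq)
    qed
    moreover have "szabo g T x y = 0" using assms(3) by simp
    ultimately have "z = 0" by simp
    then have "g z w = 0" using bilinear_lzero[OF bl] by simp
    then show ?thesis using z by simp
  qed
  have S: "T y a b w c + T y b a w c + T y a c w b + T y c a w b + T y b c w a + T y c b w a = 0"
    for y a b w c
  proof -
    have "T y (a+b+c) (a+b+c) w (a+b+c) - T y (a+b) (a+b) w (a+b) - T y (a+c) (a+c) w (a+c)
       - T y (b+c) (b+c) w (b+c) + T y a a w a + T y b b w b + T y c c w c = 0"
      by (simp only: Q)
    then show ?thesis by (simp only: l2 l3 l5)
  qed
  have "T a b c d e = 0" for a b c d e
    using alg[of T, OF A P B1 B2 S] by blast
  then show ?thesis by (intro ext) simp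
qed

end
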